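(* Let $\mathcal{F}$ be a set of static graphs that does not contain only trees. Then there exists no deterministic algorithm that satisfies the eventual underlying graph specification for the class $\mathcal{COT}|_\mathcal{F}$ of connected-over-time TVGs whose underlying graph belongs to $\mathcal{F}$.
   Context: A time-varying graph (TVG) is a tuple $g=(V,E,\mathcal{T},\rho,\zeta,\phi)$ where $V=\{v_1,\dots,v_n\}$ is a static set of vertices (processes), $E\subseteq V\times V$ a static set of edges, $\mathcal{T}\subseteq\mathbb{T}$ (with $\mathbb{T}=\mathbb{N}$ or $\mathbb{R}^+$) the lifetime, $\rho:E\times\mathcal{T}\to\{0,1\}$ the presence function, $\zeta:E\times\mathcal{T}\to\mathbb{T}$ the edge latency function, and $\phi:V\times\mathcal{T}\to\mathbb{T}$ the process latency function. Processes run a local deterministic algorithm and communicate asynchronously by messages over edges; edge presence/absence is instantly detected by the endpoints; messages on an edge that disappears are lost; a primitive Send_retry$(m,q)$ invoked by $p$ at time $t$ delivers $m$ to $q$ in finite time provided there is $t'\ge t$ such that edge $\{p,q\}$ is present from $t'$ for at least $\zeta(\{p,q\},t')$ time units. A temporal path is a sequence $\{(e_1,t_1),\dots,(e_k,t_k)\}$ where $e_1,\dots,e_k$ form a path, $\rho(e_i,t_i)=1$ for all $i$, and $t_{i+1}\ge t_i+\zeta(e_i,t_i)$. A TVG is connected-over-time if for every time $t\in\mathcal{T}$ and every pair of processes $p,q$ there is a temporal path from $p$ to $q$ after time $t$; $\mathcal{COT}$ denotes this class. The underlying graph of $g$ is $(V,E)$. An eventual missing edge is an edge that is present only a finite number of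 times during the lifetime; the eventual underlying graph of $g$ is $(V,E\setminus M_g)$, $M_g$ being the set of eventual missing edges. For a set $\mathcal{F}$ of static graphs, $\mathcal{COT}|_\mathcal{F}$ is the set of TVGs in $\mathcal{COT}$ whose underlying graph belongs to $\mathcal{F}$. An algorithm satisfies the eventual underlying graph specification for a class $\mathcal{C}$ if every execution $\gamma_0,\gamma_1,\dots$ of it on any TVG $g\in\mathcal{C}$ has a suffix $\gamma_i,\gamma_{i+1},\dots$ in every configuration of which each process outputs (in an output variable) the eventual underlying graph of $g$. *)

theory Defs
  imports Main
begin

type_synonym 'v sgraph = "'v set \<times> 'v set set"

definition sgraph_wf :: "'v sgraph \<Rightarrow> bool" where
  "sgraph_wf G \<longleftrightarrow> finite (fst G) \<and>
     (\<forall>e\<in>snd G. \<exists>u v. e = {u, v} \<and> u \<noteq> v \<and> u \<in> fst G \<and> v \<in> fst G)"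

definition sgraph_connected :: "'v sgraph \<Rightarrow> bool" where
  "sgraph_connected G \<longleftrightarrow>
     (\<forall>u\<in>fst G. \<forall>v\<in>fst G. (u, v) \<in> {(x, y). {x, y} \<in> snd G}\<^sup>*)"

definition is_cycle :: "'v sgraph \<Rightarrow> 'v list \<Rightarrow> bool" where
  "is_cycle G vs \<longleftrightarrow> 3 \<le> length vs \<and> distinct vs \<and> set vs \<subseteq> fst G \<and>
     (\<forall>i < length vs. {vs ! i, vs ! ((i + 1) mod length vs)} \<in> snd G)"

definition is_tree :: "'v sgraph \<Rightarrow> bool" where
  "is_tree G \<longleftrightarrow> sgraph_wf G \<and> sgraph_connected G \<and> \<not> (\<exists>vs. is_cycle G vs)"

section \<open>Time-varying graphs (time = nat, lifetime = all of nat)\<close>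

record 'v tvg =
  tV    :: "'v set"
  tE    :: "'v set set"
  rho   :: "'v set \<Rightarrow> nat \<Rightarrow> bool"
  zeta  :: "'v set \<Rightarrow> nat \<Rightarrow> nat"

definition tvg_wf :: "'v tvg \<Rightarrow> bool" where
  "tvg_wf g \<longleftrightarrow> sgraph_wf (tV g, tE g) \<and> (\<forall>e t. 0 < zeta g e t)"

definition underlying_graph :: "'v tvg \<Rightarrow> 'v sgraph" where
  "underlying_graph g = (tV g, tE g)"

inductive journey :: "'v tvg \<Rightarrow> nat \<Rightarrow> 'v \<Rightarrow> 'v \<Rightarrow> bool" for g where
  journey_nil:  "journey g t p p"
| journey_cons: "\<lbrakk> {p, x} \<in> tE g; t \<le> t'; rho g {p, x} t';
                   journey g (t' + zeta g {p, x} t') x q \<rbrakk> \<Longrightarrow> journey g t p q"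

definition connected_over_time :: "'v tvg \<Rightarrow> bool" where
  "connected_over_time g \<longleftrightarrow> (\<forall>t. \<forall>p\<in>tV g. \<forall>q\<in>tV g. journey g t p q)"

definition COT_F :: "'v sgraph set \<Rightarrow> 'v tvg set" where
  "COT_F F = {g. tvg_wf g \<and> connected_over_time g \<and> underlying_graph g \<in> F}"

definition eventual_missing_edges :: "'v tvg \<Rightarrow> 'v set set" where
  "eventual_missing_edges g = {e \<in> tE g. finite {t. rho g e t}}"

definition eventual_underlying_graph :: "'v tvg \<Rightarrow> 'v sgraph" where
  "eventual_underlying_graph g = (tV g, tE g - eventual_missing_edges g)"

text \<open>A deterministic algorithm: each process p (its identity is known) starts in
  state init p.  At each time unit t it performs one step: it observes the set of
  currently present incident edges (given as the set of present neighbours) and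
  the set of messages (sender, message) delivered to it at time t, moves to a new
  state and emits, for each neighbour, a set of messages.  out s is the
  output variable of a process in state s.\<close>
record ('v, 's, 'm) algorithm =
  init :: "'v \<Rightarrow> 's"
  step :: "'v \<Rightarrow> 's \<Rightarrow> 'v set \<Rightarrow> ('v \<times> 'm) set \<Rightarrow> 's \<times> ('v \<Rightarrow> 'm set)"
  out  :: "'s \<Rightarrow> 'v sgraph"

definition nbrs :: "'v tvg \<Rightarrow> 'v \<Rightarrow> nat \<Rightarrow> 'v set" where
  "nbrs g p t = {q. {p, q} \<in> tE g \<and> rho g {p, q} t}"

text \<open>A message sent over edge e at time t0 is delivered at time t0 + zeta e t0
  provided e stays present during the whole interval [t0, t0 + zeta e t0];
  otherwise it is lost.\<close>
definition delivered :: "'v tvg \<Rightarrow> 'v set \<Rightarrow> nat \<Rightarrow> nat \<Rightarrow> bool" where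
  "delivered g e t0 t \<longleftrightarrow> t = t0 + zeta g e t0 \<and> (\<forall>t'. t0 \<le> t' \<and> t' \<le> t \<longrightarrow> rho g e t')"

text \<open>A configuration at time t: the local state of every process and the set of
  messages (sender, message) delivered to every process at time t.\<close>
type_synonym ('v, 's, 'm) config = "('v \<Rightarrow> 's) \<times> ('v \<Rightarrow> ('v \<times> 'm) set)"

text \<open>Messages that q sends to p in its step at time t0, in configuration c.\<close>
definition sent :: "('v, 's, 'm) algorithm \<Rightarrow> 'v tvg \<Rightarrow> ('v, 's, 'm) config \<Rightarrow> nat \<Rightarrow> 'v \<Rightarrow> 'v \<Rightarrow> 'm set" where
  "sent A g c t0 q p =
     (if p \<in> nbrs g q t0 then snd (step A q (fst c q) (nbrs g q t0) (snd c q)) p else {})"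

fun history :: "('v, 's, 'm) algorithm \<Rightarrow> 'v tvg \<Rightarrow> nat \<Rightarrow> ('v, 's, 'm) config list" where
  "history A g 0 = [(init A, \<lambda>p. {})]"
| "history A g (Suc t) =
     (let h = history A g t in
      h @ [(\<lambda>p. fst (step A p (fst (h ! t) p) (nbrs g p t) (snd (h ! t) p)),
            \<lambda>p. {(q, m). \<exists>t0 \<le> t. delivered g {q, p} t0 (Suc t) \<and> m \<in> sent A g (h ! t0) t0 q p})])"

definition execution :: "('v, 's, 'm) algorithm \<Rightarrow> 'v tvg \<Rightarrow> nat \<Rightarrow> ('v, 's, 'm) config" where
  "execution A g t = history A g t ! t"

definition output_at :: "('v, 's, 'm) algorithm \<Rightarrow> 'v tvg \<Rightarrow> nat \<Rightarrow> 'v \<Rightarrow> 'v sgraph" where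
  "output_at A g t p = out A (fst (execution A g t) p)"

definition satisfies_EUG_spec :: "('v, 's, 'm) algorithm \<Rightarrow> 'v tvg set \<Rightarrow> bool" where
  "satisfies_EUG_spec A C \<longleftrightarrow>
     (\<forall>g\<in>C. \<exists>i. \<forall>t\<ge>i. \<forall>p\<in>tV g. output_at A g t p = eventual_underlying_graph g)"

end

theory Submission
  imports Defs
begin

definition gr :: "'v sgraph \<Rightarrow> 'v set \<Rightarrow> (nat \<Rightarrow> bool) \<Rightarrow> 'v tvg" where
  "gr G e P = \<lparr>tV = fst G, tE = snd G, rho = (\<lambda>e' t. if e' = e then P t else True), zeta = (\<lambda>_ _. 1)\<rparr>"

lemma hist_eq:
  assumes "tE g = tE g'" "zeta g = zeta g'"
  shows "(\<forall>s\<le>t. \<forall>e. rho g e s = rho g' e s) \<Longrightarrow> history A g t = history A g' t"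
proof (induction t)
  case 0
  then show ?case by simp
next
  case (Suc t)
  then have IH: "history A g t = history A g' t" by auto
  have nb: "\<And>p s. s \<le> t \<Longrightarrow> nbrs g p s = nbrs g' p s"
    using Suc.prems assms unfolding nbrs_def by auto
  have dl: "\<And>e t0. delivered g e t0 (Suc t) = delivered g' e t0 (Suc t)"
    using Suc.prems assms unfolding delivered_def by auto
  have se: "\<And>c t0 q p. t0 \<le> t \<Longrightarrow> sent A g c t0 q p = sent A g' c t0 q p"
    using nb unfolding sent_def by auto
  show ?case
    using IH nb dl se by (simp add: Let_def) (rule ext, auto simp del: split_paired_Ex, (metis se)+)
qed


lemma gr_simps[simp]: "tV (gr G e P) = fst G" "tE (gr G e P) = snd G"
  "rho (gr G e P) e' t = (if e' = e then P t else True)" "zeta (gr G e P) = (\<lambda>_ _. 1)"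
  by (auto simp: gr_def)

lemma output_gr_eq:
  assumes "\<forall>s\<le>t. P s = Q s"
  shows "output_at A (gr G e P) t p = output_at A (gr G e Q) t p"
proof -
  have "history A (gr G e P) t = history A (gr G e Q) t"
    by (rule hist_eq) (use assms in auto)
  then show ?thesis by (simp add: output_at_def execution_def)
qed

lemma eug_gr:
  "eventual_underlying_graph (gr G e P) =
     (fst G, snd G - (if e \<in> snd G \<and> finite {t. P t} then {e} else {}))"
proof -
  have "eventual_missing_edges (gr G e P) = (if e \<in> snd G \<and> finite {t. P t} then {e} else {})"
  proof -
    have "\<And>x. x \<noteq> e \<Longrightarrow> {t. x = e \<longrightarrow> P t} = UNIV" by auto
    then show ?thesis
      unfolding eventual_missing_edges_def
    proof (intro set_eqI)
      fix x assume h: "\<And>x. x \<noteq> e \<Longrightarrow> {t. x = e \<longrightarrow> P t} = UNIV"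
      show "x \<in> {e' \<in> tE (gr G e P). finite {t. rho (gr G e P) e' t}} \<longleftrightarrow>
            x \<in> (if e \<in> snd G \<and> finite {t. P t} then {e} else {})"
        using h[of x] by (cases "x = e") auto
    qed
  qed
  then show ?thesis unfolding eventual_underlying_graph_def by simp
qed

fun stage :: "((nat \<Rightarrow> bool) \<Rightarrow> nat) \<Rightarrow> nat \<Rightarrow> (nat \<Rightarrow> bool) \<times> nat" where
  "stage N 0 = ((\<lambda>_. True), N (\<lambda>_. True))"
| "stage N (Suc k) =
    ((\<lambda>t. if t \<le> snd (stage N k) then fst (stage N k) t else even (Suc k)),
     max (Suc (snd (stage N k))) (N (\<lambda>t. if t \<le> snd (stage N k) then fst (stage N k) t else even (Suc k))))"

lemma stage_N: "N (fst (stage N k)) \<le> snd (stage N k)"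
  by (cases k) auto

lemma stage_mono: "snd (stage N k) < snd (stage N (Suc k))"
  by simp

lemma stage_ge: "k \<le> snd (stage N k)"
  by (induction k) (auto simp del: stage.simps simp: Suc_le_eq
       intro: le_less_trans[OF _ stage_mono])

lemma stage_agree: "j \<le> k \<Longrightarrow> t \<le> snd (stage N j) \<Longrightarrow> fst (stage N k) t = fst (stage N j) t"
proof (induction k)
  case 0 then show ?case by simp
next
  case (Suc k)
  show ?case
  proof (cases "j = Suc k")
    case False
    then have "j \<le> k" using Suc.prems by simp
    moreover have "snd (stage N j) \<le> snd (stage N k)"
      using \<open>j \<le> k\<close> by (induction k) (auto simp: le_Suc_eq simp del: stage.simps
          intro: order.trans[OF _ less_imp_le[OF stage_mono]])
    ultimately show ?thesis using Suc by simp
  qed simp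
qed

lemma stage_tail: "snd (stage N k) < t \<Longrightarrow> fst (stage N (Suc k)) t = even (Suc k)"
  by simp

lemma limit_agree: "t \<le> snd (stage N k) \<Longrightarrow> fst (stage N t) t = fst (stage N k) t"
proof (cases "t \<le> k")
  case True
  assume "t \<le> snd (stage N k)"
  show ?thesis using stage_agree[OF True, of t N] stage_ge[of t N] by simp
next
  case False
  assume "t \<le> snd (stage N k)"
  then show ?thesis using stage_agree[of k t t N] False by simp
qed


lemma cycle_path:
  assumes cyc: "is_cycle G vs"
  shows "(vs ! 1, vs ! 0) \<in> {(x, y). {x, y} \<in> snd G - {{vs ! 0, vs ! 1}}}\<^sup>*"
proof -
  let ?R = "{(x, y). {x, y} \<in> snd G - {{vs ! 0, vs ! 1}}}"
  let ?n = "length vs"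
  from cyc have n3: "3 \<le> ?n" and dist: "distinct vs"
    and ed: "\<And>i. i < ?n \<Longrightarrow> {vs ! i, vs ! ((i + 1) mod ?n)} \<in> snd G"
    unfolding is_cycle_def by auto
  have ne: "\<And>i j. i < ?n \<Longrightarrow> j < ?n \<Longrightarrow> i \<noteq> j \<Longrightarrow> vs ! i \<noteq> vs ! j"
    using dist by (simp add: nth_eq_iff_index_eq)
  have step: "\<And>j. 1 \<le> j \<Longrightarrow> j < ?n \<Longrightarrow> (vs ! 1, vs ! j) \<in> ?R\<^sup>*"
  proof -
    fix j show "1 \<le> j \<Longrightarrow> j < ?n \<Longrightarrow> (vs ! 1, vs ! j) \<in> ?R\<^sup>*"
    proof (induction j)
      case 0 then show ?case by simp
    next
      case (Suc j)
      show ?case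
      proof (cases "j = 0")
        case True then show ?thesis by simp
      next
        case False
        then have IH: "(vs ! 1, vs ! j) \<in> ?R\<^sup>*" using Suc by simp
        have e1: "{vs ! j, vs ! (Suc j)} \<in> snd G"
          using ed[of j] Suc.prems by simp
        have "vs ! Suc j \<noteq> vs ! 0" by (rule ne) (use Suc.prems False in auto)
        moreover have "vs ! Suc j \<noteq> vs ! 1" by (rule ne) (use Suc.prems False in auto)
        ultimately have "{vs ! j, vs ! (Suc j)} \<noteq> {vs ! 0, vs ! 1}"
          by (metis doubleton_eq_iff)
        with e1 have "(vs ! j, vs ! Suc j) \<in> ?R" by simp
        with IH show ?thesis by (rule rtrancl_into_rtrancl)
      qed
    qed
  qed
  have a: "(vs ! 1, vs ! (?n - 1)) \<in> ?R\<^sup>*" using step[of "?n - 1"] n3 by simp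
  have e1: "{vs ! (?n - 1), vs ! 0} \<in> snd G"
  proof -
    have "Suc (?n - 1) = ?n" using n3 by simp
    then have "Suc (?n - 1) mod ?n = 0" by simp
    then show ?thesis using ed[of "?n - 1"] n3 by simp
  qed
  have "vs ! (?n - 1) \<noteq> vs ! 0" by (rule ne) (use n3 in auto)
  moreover have "vs ! (?n - 1) \<noteq> vs ! 1" by (rule ne) (use n3 in auto)
  ultimately have "{vs ! (?n - 1), vs ! 0} \<noteq> {vs ! 0, vs ! 1}"
    by (metis doubleton_eq_iff)
  with e1 have "(vs ! (?n - 1), vs ! 0) \<in> ?R" by simp
  with a show ?thesis by (rule rtrancl_into_rtrancl)
qed

lemma conn_minus:
  assumes cyc: "is_cycle G vs" and con: "sgraph_connected G"
    and u: "u \<in> fst G" and v: "v \<in> fst G"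
  shows "(u, v) \<in> {(x, y). {x, y} \<in> snd G - {{vs ! 0, vs ! 1}}}\<^sup>*"
proof -
  let ?R = "{(x, y). {x, y} \<in> snd G - {{vs ! 0, vs ! 1}}}"
  have sy: "sym (?R\<^sup>*)" by (rule sym_rtrancl) (auto simp: sym_def insert_commute)
  have p: "(vs ! 1, vs ! 0) \<in> ?R\<^sup>*" by (rule cycle_path[OF cyc])
  then have p2: "(vs ! 0, vs ! 1) \<in> ?R\<^sup>*" using sy by (auto simp: sym_def)
  have "{(x, y). {x, y} \<in> snd G} \<subseteq> ?R\<^sup>*"
  proof
    fix z assume "z \<in> {(x, y). {x, y} \<in> snd G}"
    then obtain x y where z: "z = (x, y)" "{x, y} \<in> snd G" by auto
    show "z \<in> ?R\<^sup>*"
    proof (cases "{x, y} = {vs ! 0, vs ! 1}")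
      case True
      then have "(x = vs ! 0 \<and> y = vs ! 1) \<or> (x = vs ! 1 \<and> y = vs ! 0)"
        by (metis doubleton_eq_iff)
      then show ?thesis using p p2 z by auto
    next
      case False then show ?thesis using z by auto
    qed
  qed
  then have "{(x, y). {x, y} \<in> snd G}\<^sup>* \<subseteq> ?R\<^sup>*" by (rule rtrancl_subset_rtrancl)
  moreover have "(u, v) \<in> {(x, y). {x, y} \<in> snd G}\<^sup>*"
    using con u v unfolding sgraph_connected_def by auto
  ultimately show ?thesis by auto
qed

lemma journey_gr:
  assumes "(p, q) \<in> {(x, y). {x, y} \<in> snd G - {e}}\<^sup>*"
  shows "journey (gr G e P) t p q"
  using assms
proof (induction arbitrary: t rule: converse_rtrancl_induct)
  case base then show ?case by (rule journey_nil)
next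
  case (step y z)
  show ?case by (rule journey_cons[where t' = t and x = z]) (use step in auto)
qed

lemma gr_in:
  assumes "G \<in> F" "sgraph_wf G" "sgraph_connected G" "is_cycle G vs"
  shows "gr G {vs ! 0, vs ! 1} P \<in> COT_F F"
proof -
  have "connected_over_time (gr G {vs ! 0, vs ! 1} P)"
    unfolding connected_over_time_def
  proof (intro allI ballI)
    fix t p q assume "p \<in> tV (gr G {vs ! 0, vs ! 1} P)" "q \<in> tV (gr G {vs ! 0, vs ! 1} P)"
    then have "p \<in> fst G" "q \<in> fst G" by simp_all
    then show "journey (gr G {vs ! 0, vs ! 1} P) t p q"
      by (intro journey_gr conn_minus[OF assms(4,3)])
  qed
  moreover have "tvg_wf (gr G {vs ! 0, vs ! 1} P)"
    unfolding tvg_wf_def using assms(2) by simp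
  moreover have "underlying_graph (gr G {vs ! 0, vs ! 1} P) \<in> F"
    unfolding underlying_graph_def using assms(1) by simp
  ultimately show ?thesis unfolding COT_F_def by simp
qed


lemma unb_inf: "(\<forall>m. \<exists>n\<ge>m. n \<in> (S::nat set)) \<Longrightarrow> infinite S"
  by (metis finite_nat_set_iff_bounded_le Suc_n_not_le_n le_trans)

theorem theorem12:
  fixes F :: "'v sgraph set"
  assumes "\<exists>G\<in>F. sgraph_wf G \<and> sgraph_connected G \<and> \<not> is_tree G"
  shows "\<not> (\<exists>A :: ('v, 's, 'm) algorithm. satisfies_EUG_spec A (COT_F F))"
proof
  assume "\<exists>A :: ('v, 's, 'm) algorithm. satisfies_EUG_spec A (COT_F F)"
  then obtain A :: "('v, 's, 'm) algorithm" where sp: "satisfies_EUG_spec A (COT_F F)" by blast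
  obtain G where G: "G \<in> F" "sgraph_wf G" "sgraph_connected G" "\<not> is_tree G"
    using assms by blast
  then obtain vs where cyc: "is_cycle G vs" unfolding is_tree_def by blast
  define e where "e = {vs ! 0, vs ! 1}"
  have n3: "3 \<le> length vs" using cyc unfolding is_cycle_def by simp
  have eE: "e \<in> snd G"
  proof -
    have "1 mod length vs = 1" using n3 by simp
    moreover have "0 < length vs" using n3 by linarith
    ultimately show ?thesis using cyc unfolding is_cycle_def e_def by force
  qed
  have v0: "vs ! 0 \<in> fst G"
  proof -
    have "vs ! 0 \<in> set vs" using n3 by (intro nth_mem) linarith
    then show ?thesis using cyc unfolding is_cycle_def by blast
  qed
  have ex: "\<exists>i. \<forall>t\<ge>i. \<forall>p\<in>fst G. output_at A (gr G e P) t p = eventual_underlying_graph (gr G e P)" for P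
    using sp gr_in[OF G(1-3) cyc, of P] unfolding satisfies_EUG_spec_def e_def by fastforce
  define N where "N P = (SOME i. \<forall>t\<ge>i. \<forall>p\<in>fst G. output_at A (gr G e P) t p = eventual_underlying_graph (gr G e P))" for P
  have Nspec: "\<forall>t\<ge>N P. \<forall>p\<in>fst G. output_at A (gr G e P) t p = eventual_underlying_graph (gr G e P)" for P
    unfolding N_def by (rule someI_ex[OF ex])
  define L where "L t = fst (stage N t) t" for t
  have outk: "output_at A (gr G e L) (snd (stage N k)) p = eventual_underlying_graph (gr G e (fst (stage N k)))"
    if "p \<in> fst G" for k p
  proof -
    have "output_at A (gr G e L) (snd (stage N k)) p = output_at A (gr G e (fst (stage N k))) (snd (stage N k)) p"
      by (rule output_gr_eq) (simp add: L_def limit_agree)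
    also have "\<dots> = eventual_underlying_graph (gr G e (fst (stage N k)))"
      using Nspec[of "fst (stage N k)"] stage_N[of N k] that by blast
    finally show ?thesis .
  qed
  have "infinite {t. L t}"
  proof (rule unb_inf, intro allI)
    fix m
    let ?k = "Suc (Suc (2 * m))"
    have "snd (stage N (Suc (2 * m))) < snd (stage N ?k)" by (rule stage_mono)
    then have "fst (stage N ?k) (snd (stage N ?k)) = True"
      using stage_tail[of N "Suc (2 * m)" "snd (stage N ?k)"] by simp
    then have "L (snd (stage N ?k))" using limit_agree[of "snd (stage N ?k)" N ?k] by (simp add: L_def)
    moreover have "m \<le> snd (stage N ?k)" using stage_ge[of ?k N] by simp
    ultimately show "\<exists>n\<ge>m. n \<in> {t. L t}" by blast
  qed
  then have eugL: "eventual_underlying_graph (gr G e L) = G" by (simp add: eug_gr)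
  obtain i where i: "\<forall>t\<ge>i. \<forall>p\<in>fst G. output_at A (gr G e L) t p = eventual_underlying_graph (gr G e L)"
    using ex by blast
  let ?k = "Suc (2 * i)"
  have fin: "finite {t. fst (stage N ?k) t}"
  proof (rule finite_subset)
    show "{t. fst (stage N ?k) t} \<subseteq> {..snd (stage N (2 * i))}"
    proof
      fix t assume "t \<in> {t. fst (stage N ?k) t}"
      then show "t \<in> {..snd (stage N (2 * i))}"
        using stage_tail[of N "2 * i" t] by (cases "t \<le> snd (stage N (2 * i))") auto
    qed
  qed simp
  have "i \<le> snd (stage N ?k)" using stage_ge[of ?k N] by simp
  then have "output_at A (gr G e L) (snd (stage N ?k)) (vs ! 0) = G"
    using i v0 eugL by simp
  moreover have "output_at A (gr G e L) (snd (stage N ?k)) (vs ! 0) = (fst G, snd G - {e})"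
    using outk[OF v0, of ?k] fin eE by (simp add: eug_gr)
  ultimately have "snd G = snd G - {e}" by (metis snd_conv)
  with eE show False by blast
qed

end
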